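(* Let $n>p\ge 2$ and consider the linear model $\mathbf{y}=\mathbf{X}\boldsymbol{\beta}+\boldsymbol{\varepsilon}$, where $\mathbf{X}=[\mathbf{x}_1,\dots,\mathbf{x}_p]$ is a known $n\times p$ matrix with linearly independent columns, each column having mean $0$ and Euclidean length $1$, $\boldsymbol{\beta}=(\beta_1,\dots,\beta_p)^T$ is unknown, and $E(\boldsymbol{\varepsilon})=\mathbf{0}$, $\mathrm{var}(\boldsymbol{\varepsilon})=\mathbf{I}$. Suppose there is a constant $r>0$ with $\mathrm{corr}(\mathbf{x}_i,\mathbf{x}_j)=r$ for all $i\ne j$. Let $\hat{\boldsymbol{\beta}}=(\mathbf{X}^T\mathbf{X})^{-1}\mathbf{X}^T\mathbf{y}$, and for $\mathbf{w}$ in the simplex $W=\{\mathbf{w}\in\mathbb{R}^p: w_i\ge0,\ \sum_i w_i=1\}$ write $\mathrm{var}(\hat{\xi}(\mathbf{w}),r)$ for the variance of $\mathbf{w}^T\hat{\boldsymbol{\beta}}$ (which depends only on $p$, $r$ and $\mathbf{w}$). Let $\mathbf{w}_0=(1/p,\dots,1/p)^T$ and $\hat\tau_a=\mathbf{w}_0^T\hat{\boldsymbol\beta}=\frac1p\sum_{i=1}^p\hat\beta_i$, the estimator of the average group effect $\tau_a=\frac1p\sum_{i=1}^p\beta_i$. Then for each fixed $r$, $$\mathrm{var}(\hat{\tau}_a,r)=\mathrm{var}(\hat{\xi}(\mathbf{w}_0),r)=\min_{\mathbf{w}\in W}\mathrm{var}(\hat{\xi}(\mathbf{w}),r).$$ Also,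 $\mathrm{var}(\hat{\tau}_a,r)$, as a function of $r\in(0,1)$, is strictly monotone decreasing with $\lim_{r\to1}\mathrm{var}(\hat{\tau}_a,r)=1/p^2$. Further, among the variances $\mathrm{var}(\hat{\xi}(\mathbf{w}),r)$, $\mathbf{w}\in W$, the variance $\mathrm{var}(\hat{\tau}_a,r)$ is the only one that remains bounded as $r\to1$; i.e., for every fixed $\mathbf{w}\in W$ with $\mathbf{w}\ne\mathbf{w}_0$, $\mathrm{var}(\hat{\xi}(\mathbf{w}),r)$ is unbounded as $r\to 1$.
   Context: The variance of $\mathbf{w}^T\hat{\boldsymbol\beta}$ in this model equals $\mathbf{w}^T(\mathbf{X}^T\mathbf{X})^{-1}\mathbf{w}$, where $\mathbf{X}^T\mathbf{X}$ has $1$ on the diagonal and $r$ off the diagonal; hence it is a function of $p$, $r$ and $\mathbf{w}$ only. *)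

theory Defs
  imports "HOL-Analysis.Analysis"
begin

definition sample_mean :: "real^'n \<Rightarrow> real" where
  "sample_mean x = (\<Sum>k\<in>UNIV. x $ k) / real CARD('n)"

definition corr :: "real^'n \<Rightarrow> real^'n \<Rightarrow> real" where
  "corr x y =
     (\<Sum>k\<in>UNIV. (x $ k - sample_mean x) * (y $ k - sample_mean y)) /
     sqrt ((\<Sum>k\<in>UNIV. (x $ k - sample_mean x)^2) * (\<Sum>k\<in>UNIV. (y $ k - sample_mean y)^2))"

definition simplex_W :: "(real^'p) set" where
  "simplex_W = {w. (\<forall>i. 0 \<le> w $ i) \<and> (\<Sum>i\<in>UNIV. w $ i) = 1}"

definition w0 :: "real^'p" where
  "w0 = (\<chi> i. 1 / real CARD('p))"

text \<open>Variance of w^T betahat for design matrix X (with var(eps) = I):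
  w^T (X^T X)^{-1} w.\<close>
definition var_est :: "real^'p^'n \<Rightarrow> real^'p \<Rightarrow> real" where
  "var_est X w = w \<bullet> (matrix_inv (transpose X ** X) *v w)"

definition corr_matrix :: "real \<Rightarrow> real^'p^'p" where
  "corr_matrix r = (\<chi> i j. if i = j then 1 else r)"

definition var_xi :: "real \<Rightarrow> real^'p \<Rightarrow> real" where
  "var_xi r w = w \<bullet> (matrix_inv (corr_matrix r :: real^'p^'p) *v w)"

end

theory Submission
  imports Defs
begin

lemma corr_mv:
  "(corr_matrix s *v (v::real^'p)) $ i = (1-s) * v$i + s * (\<Sum>j\<in>UNIV. v$j)"
proof -
  have "(corr_matrix s *v v) $ i = (\<Sum>j\<in>UNIV. s * v$j + (if i = j then (1-s) * v$j else 0))"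
    unfolding matrix_vector_mult_def corr_matrix_def
    by (auto intro!: sum.cong simp: algebra_simps)
  also have "\<dots> = s * (\<Sum>j\<in>UNIV. v$j) + (1-s) * v$i"
    by (simp add: sum.distrib sum_distrib_left)
  finally show ?thesis by simp
qed

lemma corr_solve:
  fixes w :: "real^'p" and s :: real
  defines "c \<equiv> s * (\<Sum>j\<in>UNIV. w$j) / (1 + (real CARD('p) - 1) * s)"
  assumes s1: "s \<noteq> 1" and d: "1 + (real CARD('p) - 1) * s \<noteq> 0"
  shows "corr_matrix s *v (\<chi> i. (w$i - c) / (1 - s)) = w"
proof -
  let ?v = "(\<chi> i. (w$i - c) / (1 - s)) :: real^'p"
  have sv: "(\<Sum>j\<in>UNIV. ?v$j) = ((\<Sum>j\<in>UNIV. w$j) - real CARD('p) * c) / (1 - s)"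
    by (simp add: sum_divide_distrib[symmetric] sum_subtractf)
  have key: "s * ((\<Sum>j\<in>UNIV. w$j) - real CARD('p) * c) / (1 - s) = c"
  proof -
    let ?S = "\<Sum>j\<in>UNIV. w$j" and ?D = "1 + (real CARD('p) - 1) * s"
    have "?S - real CARD('p) * c = ?S * (1 - s) / ?D"
      using d unfolding c_def by (simp add: field_simps)
    hence "s * (?S - real CARD('p) * c) = c * (1 - s)"
      unfolding c_def by simp
    thus ?thesis using s1 by (simp add: field_simps)
  qed
  show ?thesis
  proof (rule vec_eq_iff[THEN iffD2, rule_format])
    fix i :: 'p
    have "(corr_matrix s *v ?v) $ i = (w$i - c) + s * (\<Sum>j\<in>UNIV. ?v$j)"
      using s1 by (simp add: corr_mv)
    also have "\<dots> = w$i" using key sv by simp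
    finally show "(corr_matrix s *v ?v) $ i = w$i" .
  qed
qed

lemma inv_apply:
  fixes M :: "real^'p^'p"
  assumes "\<And>w. M *v sol w = w"
  shows "matrix_inv M *v w = sol w"
proof -
  have "surj ((*v) M)" using assms by (metis surjI)
  then obtain B where B: "M ** B = mat 1" using matrix_right_invertible_surjective by blast
  hence "B ** M = mat 1" using matrix_left_right_inverse by blast
  with B have "M ** matrix_inv M = mat 1 \<and> matrix_inv M ** M = mat 1"
    unfolding matrix_inv_def by (rule someI[where x=B, OF conjI])
  hence "matrix_inv M ** M = mat 1" by blast
  hence "matrix_inv M *v (M *v sol w) = sol w"
    by (metis matrix_vector_mul_assoc matrix_vector_mul_lid)
  thus ?thesis using assms by simp
qed

lemma var_formula:
  fixes w :: "real^'p"
  assumes s1: "s \<noteq> 1" and d: "1 + (real CARD('p) - 1) * s \<noteq> 0"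
  shows "var_xi s w = (w \<bullet> w - s * (\<Sum>j\<in>UNIV. w$j)^2 / (1 + (real CARD('p) - 1) * s)) / (1 - s)"
proof -
  define c where "c w = s * (\<Sum>j\<in>UNIV. w$j) / (1 + (real CARD('p) - 1) * s)" for w :: "real^'p"
  have "matrix_inv (corr_matrix s :: real^'p^'p) *v w = (\<chi> i. (w$i - c w) / (1 - s))"
    by (rule inv_apply[where sol = "\<lambda>w. (\<chi> i. (w$i - c w) / (1 - s))"])
       (use corr_solve[OF s1 d] in \<open>simp add: c_def\<close>)
  hence "var_xi s w = (\<Sum>i\<in>UNIV. w$i * ((w$i - c w) / (1 - s)))"
    by (simp add: var_xi_def inner_vec_def)
  also have "\<dots> = (w \<bullet> w - c w * (\<Sum>j\<in>UNIV. w$j)) / (1 - s)"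
    by (simp add: inner_vec_def sum_divide_distrib[symmetric] algebra_simps sum_subtractf sum_distrib_left sum_distrib_right)
  also have "\<dots> = (w \<bullet> w - s * (\<Sum>j\<in>UNIV. w$j)^2 / (1 + (real CARD('p) - 1) * s)) / (1 - s)"
    by (simp add: c_def power2_eq_square)
  finally show ?thesis .
qed


lemma gram:
  fixes X :: "real^'p^'n"
  assumes mean0: "\<forall>i. sample_mean (column i X) = 0"
    and len1: "\<forall>i. norm (column i X) = 1"
    and corr_r: "\<forall>i j. i \<noteq> j \<longrightarrow> corr (column i X) (column j X) = r"
  shows "transpose X ** X = corr_matrix r"
proof -
  have ent: "(transpose X ** X) $ i $ j = column i X \<bullet> column j X" for i j
    by (simp add: matrix_matrix_mult_def transpose_def column_def inner_vec_def)
  have sq: "(\<Sum>k\<in>UNIV. (column i X $ k)^2) = 1" for i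
  proof -
    have "(\<Sum>k\<in>UNIV. (column i X $ k)^2) = column i X \<bullet> column i X"
      by (simp add: inner_vec_def power2_eq_square)
    also have "\<dots> = 1" using len1 by (simp add: dot_square_norm)
    finally show ?thesis .
  qed
  have off: "column i X \<bullet> column j X = r" if "i \<noteq> j" for i j
  proof -
    have "corr (column i X) (column j X) = column i X \<bullet> column j X"
      unfolding corr_def using mean0 sq by (simp add: inner_vec_def)
    thus ?thesis using corr_r that by simp
  qed
  have dg: "column i X \<bullet> column i X = 1" for i
    using len1 by (simp add: dot_square_norm)
  show ?thesis
    by (simp add: vec_eq_iff ent corr_matrix_def off dg)
qed

lemma r_lt_1:
  fixes X :: "real^'p^'n"
  assumes p2: "CARD('p) \<ge> 2"
    and indep: "\<forall>c. X *v c = 0 \<longrightarrow> c = 0"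
    and G: "transpose X ** X = corr_matrix r"
  shows "r < 1"
proof -
  obtain i j :: 'p where ij: "i \<noteq> j"
  proof -
    have "\<not> (\<forall>a1\<in>(UNIV::'p set). \<forall>a2\<in>UNIV. a1 = a2)"
      using p2 card_le_Suc0_iff_eq[of "UNIV :: 'p set"] by auto
    thus ?thesis using that by blast
  qed
  define c :: "real^'p" where "c = (\<chi> k. if k = i then 1 else if k = j then -1 else 0)"
  have "c \<noteq> 0" using ij by (auto simp: c_def vec_eq_iff)
  hence nz: "X *v c \<noteq> 0" using indep by blast
  have sc: "(\<Sum>k\<in>UNIV. c$k) = 0"
  proof -
    have "(\<Sum>k\<in>UNIV. c$k) = (\<Sum>k\<in>UNIV. (if k = i then 1 else 0) - (if k = j then 1 else 0::real))"
      using ij by (intro sum.cong) (auto simp: c_def)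
    also have "\<dots> = 0" by (simp add: sum_subtractf)
    finally show ?thesis .
  qed
  have cc: "c \<bullet> c = 2"
  proof -
    have "c \<bullet> c = (\<Sum>k\<in>UNIV. (if k = i then 1 else 0) + (if k = j then 1 else 0::real))"
      unfolding inner_vec_def using ij by (intro sum.cong) (auto simp: c_def)
    also have "\<dots> = 2" by (simp add: sum.distrib)
    finally show ?thesis .
  qed
  have "(X *v c) \<bullet> (X *v c) = c \<bullet> ((transpose X ** X) *v c)"
    by (metis dot_lmul_matrix matrix_vector_mul_assoc vector_transpose_matrix)
  also have "(transpose X ** X) *v c = (1 - r) *\<^sub>R c"
    by (simp add: G vec_eq_iff corr_mv sc)
  also have "c \<bullet> ((1 - r) *\<^sub>R c) = 2 * (1 - r)" by (simp add: cc)
  finally have "(X *v c) \<bullet> (X *v c) = 2 * (1 - r)" .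
  moreover have "(X *v c) \<bullet> (X *v c) > 0" using nz by simp
  ultimately show ?thesis by simp
qed


lemma sumsq_dev:
  fixes w :: "real^'p"
  assumes "(\<Sum>i\<in>UNIV. w$i) = 1"
  shows "w \<bullet> w - 1 / real CARD('p) = (\<Sum>i\<in>UNIV. (w$i - 1 / real CARD('p))^2)"
proof -
  let ?p = "real CARD('p)"
  have "(\<Sum>i\<in>UNIV. (w$i - 1 / ?p)^2) = (\<Sum>i\<in>UNIV. (w$i)^2 - 2 / ?p * w$i + 1 / ?p^2)"
    by (intro sum.cong) (auto simp: power2_eq_square field_simps)
  also have "\<dots> = (\<Sum>i\<in>UNIV. (w$i)^2) - 2 / ?p * (\<Sum>i\<in>UNIV. w$i) + ?p / ?p^2"
    by (simp add: sum.distrib sum_subtractf sum_distrib_left)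
  also have "\<dots> = w \<bullet> w - 1 / ?p"
    using assms by (simp add: inner_vec_def power2_eq_square)
  finally show ?thesis by simp
qed

lemma w0_simplex: "(w0 :: real^'p) \<in> simplex_W"
  by (simp add: w0_def simplex_W_def)

lemma var_simplex:
  fixes w :: "real^'p"
  assumes "(\<Sum>i\<in>UNIV. w$i) = 1" and "0 \<le> s" "s < 1"
  shows "var_xi s w = (w \<bullet> w - s / (1 + (real CARD('p) - 1) * s)) / (1 - s)"
proof -
  have "(real CARD('p) - 1) * s \<ge> 0" using assms by simp
  hence "1 + (real CARD('p) - 1) * s \<noteq> 0" by linarith
  thus ?thesis using var_formula[of s w] assms by simp
qed

lemma var_w0:
  assumes "0 \<le> s" "s < 1"
  shows "var_xi s (w0 :: real^'p) = 1 / (real CARD('p) * (1 + (real CARD('p) - 1) * s))"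
proof -
  let ?p = "real CARD('p)"
  have pos: "1 + (?p - 1) * s > 0" using assms by (simp add: add_pos_nonneg)
  have sw: "(\<Sum>i\<in>UNIV. (w0::real^'p)$i) = 1" using w0_simplex unfolding simplex_W_def by blast
  have ww: "(w0::real^'p) \<bullet> w0 = 1 / ?p" by (simp add: w0_def inner_vec_def power2_eq_square)
  have "var_xi s (w0 :: real^'p) = (1 / ?p - s / (1 + (?p - 1) * s)) / (1 - s)"
    using var_simplex[OF sw assms] ww by simp
  also have "1 / ?p - s / (1 + (?p - 1) * s) = (1 - s) / (?p * (1 + (?p - 1) * s))"
    using pos by (simp add: field_simps)
  also have "(1 - s) / (?p * (1 + (?p - 1) * s)) / (1 - s) = 1 / (?p * (1 + (?p - 1) * s))"
    using assms by simp
  finally show ?thesis .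
qed

theorem corollary2:
  fixes X :: "real^'p^'n" and r :: real
  assumes p2: "CARD('p) \<ge> 2"
    and np: "CARD('n) > CARD('p)"
    and indep: "\<forall>c. X *v c = 0 \<longrightarrow> c = 0"
    and mean0: "\<forall>i. sample_mean (column i X) = 0"
    and len1: "\<forall>i. norm (column i X) = 1"
    and corr_r: "\<forall>i j. i \<noteq> j \<longrightarrow> corr (column i X) (column j X) = r"
    and rpos: "r > 0"
  shows "(\<forall>w. var_est X w = var_xi r w)
    \<and> (w0 :: real^'p) \<in> simplex_W
    \<and> (\<forall>w \<in> (simplex_W :: (real^'p) set). var_xi r (w0 :: real^'p) \<le> var_xi r w)
    \<and> strict_antimono_on {0<..<1} (\<lambda>s. var_xi s (w0 :: real^'p))
    \<and> ((\<lambda>s. var_xi s (w0 :: real^'p)) \<longlongrightarrow> 1 / (real CARD('p))^2) (at_left 1)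
    \<and> (\<forall>w \<in> (simplex_W :: (real^'p) set). w \<noteq> w0 \<longrightarrow>
         \<not> (\<exists>B. \<forall>\<^sub>F s in at_left 1. \<bar>var_xi s w\<bar> \<le> B))"
proof -
  let ?p = "real CARD('p)"
  have G: "transpose X ** X = corr_matrix r" using gram mean0 len1 corr_r by blast
  have r1: "r < 1" using r_lt_1[OF p2 indep G] .
  have p1: "?p \<ge> 2" using p2 by simp
  have A: "\<forall>w. var_est X w = var_xi r w" by (simp add: var_est_def var_xi_def G)
  have S: "\<forall>w \<in> (simplex_W :: (real^'p) set). var_xi r (w0 :: real^'p) \<le> var_xi r w"
  proof
    fix w :: "real^'p" assume "w \<in> simplex_W"
    hence sw: "(\<Sum>i\<in>UNIV. w$i) = 1" unfolding simplex_W_def by blast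
    have sw0: "(\<Sum>i\<in>UNIV. (w0::real^'p)$i) = 1" using w0_simplex unfolding simplex_W_def by blast
    have ww0: "(w0::real^'p) \<bullet> w0 = 1 / ?p" by (simp add: w0_def inner_vec_def power2_eq_square)
    have "w \<bullet> w - 1 / ?p \<ge> 0" using sumsq_dev[OF sw] by (simp add: sum_nonneg)
    thus "var_xi r (w0 :: real^'p) \<le> var_xi r w"
      using var_simplex[OF sw, of r] var_simplex[OF sw0, of r] rpos r1 ww0
      by (simp add: divide_right_mono)
  qed
  have M: "strict_antimono_on {0<..<1} (\<lambda>s. var_xi s (w0 :: real^'p))"
  proof (rule monotone_onI)
    fix a b :: real assume ab: "a \<in> {0<..<1}" "b \<in> {0<..<1}" "a < b"
    have "?p * (1 + (?p - 1) * a) < ?p * (1 + (?p - 1) * b)"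
      using ab p1 by (simp add: mult_strict_left_mono)
    moreover have "0 < ?p * (1 + (?p - 1) * a)" using ab p1 by (simp add: add_pos_nonneg)
    ultimately show "var_xi b (w0 :: real^'p) < var_xi a (w0 :: real^'p)"
      using ab by (simp add: var_w0 frac_less2)
  qed
  have L: "((\<lambda>s. var_xi s (w0 :: real^'p)) \<longlongrightarrow> 1 / ?p^2) (at_left 1)"
  proof -
    have e0: "\<forall>\<^sub>F s in at_left 1. s \<in> {0<..<1::real}" by (rule eventually_at_left_real) simp
    have ev: "\<forall>\<^sub>F s in at_left 1. 1 / (?p * (1 + (?p - 1) * s)) = var_xi s (w0 :: real^'p)"
      using e0 by (rule eventually_mono) (simp add: var_w0)
    have "((\<lambda>s. 1 / (?p * (1 + (?p - 1) * s))) \<longlongrightarrow> 1 / (?p * (1 + (?p - 1) * 1))) (at_left 1)"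
      using p1 by (intro tendsto_intros) auto
    hence "((\<lambda>s. 1 / (?p * (1 + (?p - 1) * s))) \<longlongrightarrow> 1 / ?p^2) (at_left 1)"
      by (simp add: power2_eq_square)
    thus ?thesis using ev by (rule tendsto_cong[THEN iffD1, rotated])
  qed
  have U: "\<forall>w \<in> (simplex_W :: (real^'p) set). w \<noteq> w0 \<longrightarrow>
         \<not> (\<exists>B. \<forall>\<^sub>F s in at_left 1. \<bar>var_xi s w\<bar> \<le> B)"
  proof (intro ballI impI notI)
    fix w :: "real^'p" assume ws: "w \<in> simplex_W" and ne: "w \<noteq> w0"
    assume "\<exists>B. \<forall>\<^sub>F s in at_left 1. \<bar>var_xi s w\<bar> \<le> B"
    then obtain B where B: "\<forall>\<^sub>F s in at_left 1. \<bar>var_xi s w\<bar> \<le> B" by blast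
    have sw: "(\<Sum>i\<in>UNIV. w$i) = 1" using ws unfolding simplex_W_def by blast
    obtain k where k: "w$k \<noteq> 1 / ?p" using ne by (auto simp: vec_eq_iff w0_def)
    have "(\<Sum>i\<in>UNIV. (w$i - 1 / ?p)^2) > 0"
    proof (rule ccontr)
      assume "\<not> ?thesis"
      hence "(\<Sum>i\<in>UNIV. (w$i - 1 / ?p)^2) = 0" by (meson not_less sum_nonneg zero_le_power2 order.antisym)
      hence "(w$k - 1 / ?p)^2 = 0" by (simp add: sum_nonneg_eq_0_iff)
      thus False using k by simp
    qed
    hence apos: "w \<bullet> w - 1 / ?p > 0" using sumsq_dev[OF sw] by simp
    define \<delta> where "\<delta> = (w \<bullet> w - 1 / ?p) / 2"
    have dpos: "\<delta> > 0" using apos by (simp add: \<delta>_def)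
    have "((\<lambda>s. w \<bullet> w - s / (1 + (?p - 1) * s)) \<longlongrightarrow> w \<bullet> w - 1 / (1 + (?p - 1) * 1)) (at_left 1)"
      using p1 by (intro tendsto_intros) auto
    hence "((\<lambda>s. w \<bullet> w - s / (1 + (?p - 1) * s)) \<longlongrightarrow> w \<bullet> w - 1 / ?p) (at_left 1)" by simp
    hence E1: "\<forall>\<^sub>F s in at_left 1. \<delta> < w \<bullet> w - s / (1 + (?p - 1) * s)"
      using apos by (intro order_tendstoD) (auto simp: \<delta>_def)
    define t where "t = max 0 (1 - \<delta> / (\<bar>B\<bar> + 1))"
    have t1: "t < 1" using dpos by (simp add: t_def)
    have E2: "\<forall>\<^sub>F s in at_left 1. s \<in> {t<..<1}" using eventually_at_left_real[OF t1] .
    have "\<forall>\<^sub>F s in at_left (1::real). False"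
      using B E1 E2
    proof eventually_elim
      case (elim s)
      have s0: "0 \<le> s" "s < 1" using elim(3) by (auto simp: t_def)
      have "1 - s < \<delta> / (\<bar>B\<bar> + 1)" using elim(3) by (auto simp: t_def)
      hence "(\<bar>B\<bar> + 1) * (1 - s) < \<delta>" by (simp add: field_simps)
      also have "\<delta> < w \<bullet> w - s / (1 + (?p - 1) * s)" using elim(2) .
      finally have "\<bar>B\<bar> + 1 < (w \<bullet> w - s / (1 + (?p - 1) * s)) / (1 - s)"
        using s0 by (simp add: field_simps)
      also have "\<dots> = var_xi s w" using var_simplex[OF sw s0] by simp
      finally show False using elim(1) by linarith
    qed
    thus False by simp
  qed
  show ?thesis using A w0_simplex S M L U by blast
qed

end
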